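(* Let $\sigma$ and $\tau$ be compositions of the same positive integer $m$. Then the map $\Psi_{\sigma,\tau}:\Gamma(\mathsf{hypo},\sigma)\to\Gamma(\mathsf{hypo},\tau)$, $T\mapsto\pi_\tau(\overline{T})$, is an isomorphism of unlabelled directed graphs.
   Context: Entries are positive integers. A quasi-array of size $m$ is an array $Q$ with cells $(i,j)$, $1\le i\le m$, $1\le j\le m-i+1$, each containing a positive integer, with first row weakly increasing and $Q_{(i,j)}=Q_{(1,i+j-1)}+i-1$. A quasi-ribbon tableau of shape $\sigma=(\sigma_1,\dots,\sigma_r)$ is a filling with positive integers of the diagram having $\sigma_i$ cells in row $i$, the leftmost cell of row $i+1$ directly below the rightmost cell of row $i$, weakly increasing along rows and strictly increasing down columns. Its column reading is the word read column by column left to right, each column bottom to top. Quasi-Kashiwara operator $f_i$ on a word $u$: undefined if $u$ contains a subsequence $(i+1)\,i$ or contains no $i$; otherwise replaces the rightmost $i$ by $i+1$. $\Gamma(\mathsf{hypo},\sigma)$ is the directed graph whose vertices are the quasi-ribbon tableaux of shape $\sigma$ (identified with their column readings), with an edge $u\to f_i(u)$ labelled $i$ whenever defined. For a quasi-array $Q$ of size $m$ and composition $\tau$ of $m$, $\pi_\tau(Q)$ is the quasi-ribbon tableau formed by the cells of $Q$ making up a quasi-ribbon diagram of shape $\tau$ whose first cell is $(1,1)$. For a quasi-ribbon tableau $T$ of shape $\sigma$ with $m$ cells, $\overline{T}$ is the unique quasi-array of size $m$ with $\pi_\sigma(\overline{T})=T$. *)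

theory Defs
  imports Main
begin

(* Conventions: all coordinates (row i, column j) are 1-based, as in the paper.
   Rows are numbered top to bottom, columns left to right.
   Tableaux and quasi-arrays are functions nat \<times> nat \<Rightarrow> nat that are 0 outside
   their set of cells (so that a filling is a unique object). *)

definition is_composition :: "nat \<Rightarrow> nat list \<Rightarrow> bool" where
  "is_composition m \<sigma> \<longleftrightarrow> (\<forall>x\<in>set \<sigma>. 0 < x) \<and> sum_list \<sigma> = m"

(* column of the leftmost cell of row i (1-based) of the quasi-ribbon diagram of shape \<sigma>:
   the leftmost cell of row i+1 lies directly below the rightmost cell of row i *)
definition qr_row_start :: "nat list \<Rightarrow> nat \<Rightarrow> nat" where
  "qr_row_start \<sigma> i = 1 + sum_list (map (\<lambda>x. x - 1) (take (i - 1) \<sigma>))"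

definition qr_diagram :: "nat list \<Rightarrow> (nat \<times> nat) set" where
  "qr_diagram \<sigma> = {(i, j). 1 \<le> i \<and> i \<le> length \<sigma> \<and>
      qr_row_start \<sigma> i \<le> j \<and> j < qr_row_start \<sigma> i + \<sigma> ! (i - 1)}"

definition is_qr_tableau :: "nat list \<Rightarrow> (nat \<times> nat \<Rightarrow> nat) \<Rightarrow> bool" where
  "is_qr_tableau \<sigma> T \<longleftrightarrow>
     (\<forall>c. c \<notin> qr_diagram \<sigma> \<longrightarrow> T c = 0) \<and>
     (\<forall>c\<in>qr_diagram \<sigma>. 1 \<le> T c) \<and>
     (\<forall>i j. (i, j) \<in> qr_diagram \<sigma> \<and> (i, Suc j) \<in> qr_diagram \<sigma> \<longrightarrow> T (i, j) \<le> T (i, Suc j)) \<and>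
     (\<forall>i j. (i, j) \<in> qr_diagram \<sigma> \<and> (Suc i, j) \<in> qr_diagram \<sigma> \<longrightarrow> T (i, j) < T (Suc i, j))"

definition col_reading :: "nat list \<Rightarrow> (nat \<times> nat \<Rightarrow> nat) \<Rightarrow> nat list" where
  "col_reading \<sigma> T = concat (map (\<lambda>j. map (\<lambda>i. T (i, j))
       (rev (filter (\<lambda>i. (i, j) \<in> qr_diagram \<sigma>) [1..<Suc (length \<sigma>)])))
     [1..<Suc (sum_list \<sigma>)])"

definition qk_f :: "nat \<Rightarrow> nat list \<Rightarrow> nat list option" where
  "qk_f i u = (if i \<notin> set u \<or>
                  (\<exists>p q. p < q \<and> q < length u \<and> u ! p = i + 1 \<and> u ! q = i)
               then None
               else Some (u[Max {k. k < length u \<and> u ! k = i} := i + 1]))"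

(* the graph \<Gamma>(hypo, \<sigma>): vertices the quasi-ribbon tableaux of shape \<sigma>
   (identified with their column readings) *)
definition hypo_vertices :: "nat list \<Rightarrow> (nat \<times> nat \<Rightarrow> nat) set" where
  "hypo_vertices \<sigma> = {T. is_qr_tableau \<sigma> T}"

definition hypo_edges :: "nat list \<Rightarrow> ((nat \<times> nat \<Rightarrow> nat) \<times> (nat \<times> nat \<Rightarrow> nat)) set" where
  "hypo_edges \<sigma> = {(T, T'). T \<in> hypo_vertices \<sigma> \<and> T' \<in> hypo_vertices \<sigma> \<and>
      (\<exists>i\<ge>1. qk_f i (col_reading \<sigma> T) = Some (col_reading \<sigma> T'))}"

definition is_quasi_array :: "nat \<Rightarrow> (nat \<times> nat \<Rightarrow> nat) \<Rightarrow> bool" where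
  "is_quasi_array m Q \<longleftrightarrow>
     (\<forall>i j. \<not> (1 \<le> i \<and> i \<le> m \<and> 1 \<le> j \<and> j \<le> m - i + 1) \<longrightarrow> Q (i, j) = 0) \<and>
     (\<forall>i j. 1 \<le> i \<and> i \<le> m \<and> 1 \<le> j \<and> j \<le> m - i + 1 \<longrightarrow>
            1 \<le> Q (i, j) \<and> Q (i, j) = Q (1, i + j - 1) + (i - 1)) \<and>
     (\<forall>j. 1 \<le> j \<and> j < m \<longrightarrow> Q (1, j) \<le> Q (1, Suc j))"

definition qa_proj :: "nat list \<Rightarrow> (nat \<times> nat \<Rightarrow> nat) \<Rightarrow> (nat \<times> nat \<Rightarrow> nat)" where
  "qa_proj \<tau> Q = (\<lambda>c. if c \<in> qr_diagram \<tau> then Q c else 0)"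

definition qa_bar :: "nat list \<Rightarrow> (nat \<times> nat \<Rightarrow> nat) \<Rightarrow> (nat \<times> nat \<Rightarrow> nat)" where
  "qa_bar \<sigma> T = (THE Q. is_quasi_array (sum_list \<sigma>) Q \<and> qa_proj \<sigma> Q = T)"

definition Psi :: "nat list \<Rightarrow> nat list \<Rightarrow> (nat \<times> nat \<Rightarrow> nat) \<Rightarrow> (nat \<times> nat \<Rightarrow> nat)" where
  "Psi \<sigma> \<tau> T = qa_proj \<tau> (qa_bar \<sigma> T)"

definition digraph_iso ::
  "('a \<Rightarrow> 'b) \<Rightarrow> 'a set \<Rightarrow> ('a \<times> 'a) set \<Rightarrow> 'b set \<Rightarrow> ('b \<times> 'b) set \<Rightarrow> bool" where
  "digraph_iso \<phi> V E V' E' \<longleftrightarrow> bij_betw \<phi> V V' \<and>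
     (\<forall>u\<in>V. \<forall>v\<in>V. (u, v) \<in> E \<longleftrightarrow> (\<phi> u, \<phi> v) \<in> E')"

end

theory Submission
  imports Defs
begin


lemma sum_minus1: "(\<forall>x\<in>set xs. 0<x) \<Longrightarrow> sum_list (map (\<lambda>x. x - 1) xs) + length xs = sum_list xs"
  by (induction xs) auto

definition Rc :: "nat \<times> nat \<Rightarrow> nat \<times> nat \<Rightarrow> bool" where
  "Rc c c' \<longleftrightarrow> snd c < snd c' \<or> (snd c = snd c' \<and> fst c' < fst c)"

definition dg :: "nat \<times> nat \<Rightarrow> nat" where "dg c = fst c + snd c - 1"

locale comp =
  fixes \<sigma> :: "nat list"
  assumes pos: "\<forall>x\<in>set \<sigma>. 0 < x"
begin

abbreviation "M \<equiv> sum_list \<sigma>"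
abbreviation "len \<equiv> length \<sigma>"
abbreviation "D \<equiv> qr_diagram \<sigma>"
definition P :: "nat \<Rightarrow> nat" where "P i = sum_list (take i \<sigma>)"

lemma P0[simp]: "P 0 = 0" by (simp add: P_def)
lemma nth_pos: "i < len \<Longrightarrow> 0 < \<sigma>!i" using pos nth_mem by blast
lemma P_Suc: "i < len \<Longrightarrow> P (Suc i) = P i + \<sigma>!i"
  by (simp add: P_def take_Suc_conv_app_nth)
lemma P_len: "P len = M" by (simp add: P_def)
lemma P_grow: "i \<le> i' \<Longrightarrow> i' \<le> len \<Longrightarrow> P i + (i' - i) \<le> P i'"
proof (induction i' rule: dec_induct)
  case base then show ?case by simp
next
  case (step j)
  then show ?case using P_Suc[of j] nth_pos[of j] by (simp add: Suc_diff_le)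
qed

lemma row_start: "i0 < len \<Longrightarrow> qr_row_start \<sigma> (Suc i0) + i0 = 1 + P i0"
proof -
  assume a: "i0 < len"
  have "\<forall>x\<in>set (take i0 \<sigma>). 0<x" using pos by (meson in_set_takeD)
  from sum_minus1[OF this] a show ?thesis by (simp add: qr_row_start_def P_def)
qed

lemma Dchar_Suc: "(Suc i0, b) \<in> D \<longleftrightarrow> i0 < len \<and> P i0 < i0 + b \<and> i0 + b \<le> P (Suc i0)"
proof
  assume h: "(Suc i0, b) \<in> D"
  then have a: "i0 < len" by (simp add: qr_diagram_def)
  then show "i0 < len \<and> P i0 < i0 + b \<and> i0 + b \<le> P (Suc i0)"
    using h row_start[OF a] P_Suc[OF a] by (simp add: qr_diagram_def)
next
  assume h: "i0 < len \<and> P i0 < i0 + b \<and> i0 + b \<le> P (Suc i0)"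
  then have a: "i0 < len" by simp
  then show "(Suc i0, b) \<in> D"
    using h row_start[OF a] P_Suc[OF a] by (simp add: qr_diagram_def)
qed

lemma D0: "(0, b) \<notin> D" by (simp add: qr_diagram_def)

lemma D_cases: assumes "c \<in> D" obtains i0 b where "c = (Suc i0, b)" "i0 < len" "P i0 < i0 + b" "i0 + b \<le> P (Suc i0)"
proof -
  obtain a b where c: "c = (a,b)" by (cases c)
  then obtain i0 where "a = Suc i0" using D0 assms by (cases a) auto
  then show ?thesis using that assms c Dchar_Suc by auto
qed

lemma D_props: assumes "c \<in> D" shows "1 \<le> fst c" "fst c \<le> len" "1 \<le> snd c" "1 \<le> dg c" "dg c \<le> M"
    "fst c \<le> dg c" "snd c \<le> dg c"
proof -
  obtain i0 b where c: "c = (Suc i0, b)" "i0 < len" "P i0 < i0 + b" "i0 + b \<le> P (Suc i0)"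
    using assms D_cases by blast
  have "P 0 + (i0 - 0) \<le> P i0" using P_grow[of 0 i0] c by simp
  then have b: "1 \<le> b" using c by simp
  have "P (Suc i0) + (len - Suc i0) \<le> P len" using P_grow[of "Suc i0" len] c by simp
  then have "i0 + b \<le> M" using c P_len by simp
  then show "1 \<le> fst c" "fst c \<le> len" "1 \<le> snd c" "1 \<le> dg c" "dg c \<le> M" "fst c \<le> dg c" "snd c \<le> dg c"
    using c b by (auto simp: dg_def)
qed

lemma D_exists: assumes "1 \<le> k" "k \<le> M" shows "\<exists>c\<in>D. dg c = k"
proof -
  have ne: "len \<noteq> 0" using assms by auto
  have ex: "\<exists>i. k \<le> P (Suc i)" using P_len ne assms by (metis Suc_pred' neq0_conv)
  define i0 where "i0 = (LEAST i. k \<le> P (Suc i))"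
  have k1: "k \<le> P (Suc i0)" unfolding i0_def using ex by (rule LeastI_ex)
  have i0: "i0 \<le> len - 1" unfolding i0_def using P_len ne assms
    by (metis Least_le Suc_pred' neq0_conv)
  have k0: "P i0 < k"
  proof (cases i0)
    case 0 then show ?thesis using assms by simp
  next
    case (Suc i1)
    then have "\<not> k \<le> P (Suc i1)" using not_less_Least[of i1 "\<lambda>i. k \<le> P (Suc i)"] i0_def by simp
    then show ?thesis using Suc by simp
  qed
  have "P 0 + (i0 - 0) \<le> P i0" using P_grow[of 0 i0] i0 ne by simp
  moreover have "i0 < len" using i0 ne by linarith
  ultimately have "(Suc i0, k - i0) \<in> D" using Dchar_Suc k0 k1 by auto
  moreover have "dg (Suc i0, k - i0) = k" using \<open>P 0 + (i0 - 0) \<le> P i0\<close> k0 by (simp add: dg_def)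
  ultimately show ?thesis by blast
qed

lemma D_unique: assumes "c \<in> D" "c' \<in> D" "dg c = dg c'" shows "c = c'"
proof -
  obtain i b where c: "c = (Suc i, b)" "i < len" "P i < i + b" "i + b \<le> P (Suc i)"
    using assms D_cases by blast
  obtain i' b' where c': "c' = (Suc i', b')" "i' < len" "P i' < i' + b'" "i' + b' \<le> P (Suc i')"
    using assms D_cases by blast
  have k: "i + b = i' + b'" using assms c c' by (simp add: dg_def)
  have "\<not> i < i'"
  proof
    assume "i < i'" then have "P (Suc i) + (i' - Suc i) \<le> P i'" using P_grow c' by simp
    then show False using c c' k by simp
  qed
  moreover have "\<not> i' < i"
  proof
    assume "i' < i" then have "P (Suc i') + (i - Suc i') \<le> P i" using P_grow c by simp
    then show False using c c' k by simp
  qed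
  ultimately show ?thesis using c c' k by simp
qed

lemma D_next: assumes "c \<in> D" "dg c < M"
  shows "(fst c, Suc (snd c)) \<in> D \<or> (Suc (fst c), snd c) \<in> D"
proof -
  obtain i b where c: "c = (Suc i, b)" "i < len" "P i < i + b" "i + b \<le> P (Suc i)"
    using assms D_cases by blast
  show ?thesis
  proof (cases "i + b < P (Suc i)")
    case True
    then show ?thesis using c Dchar_Suc by auto
  next
    case False
    then have e: "i + b = P (Suc i)" using c by simp
    have "Suc i < len"
    proof (rule ccontr)
      assume "\<not> Suc i < len" then have "Suc i = len" using c by simp
      then show False using e P_len assms c by (simp add: dg_def)
    qed
    then have "P (Suc (Suc i)) = P (Suc i) + \<sigma>!(Suc i)" "0 < \<sigma>!(Suc i)" using P_Suc nth_pos by auto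
    then have "(Suc (Suc i), b) \<in> D" using Dchar_Suc \<open>Suc i < len\<close> e by simp
    then show ?thesis using c by simp
  qed
qed

definition cellof :: "nat \<Rightarrow> nat \<times> nat" where "cellof k = (THE c. c \<in> D \<and> dg c = k)"

lemma cellof: assumes "1 \<le> k" "k \<le> M" shows "cellof k \<in> D" "dg (cellof k) = k"
proof -
  have "\<exists>!c. c \<in> D \<and> dg c = k" using D_exists[OF assms] D_unique by blast
  then have "cellof k \<in> D \<and> dg (cellof k) = k" unfolding cellof_def by (rule theI')
  then show "cellof k \<in> D" "dg (cellof k) = k" by auto
qed

lemma cellof_eq: "c \<in> D \<Longrightarrow> cellof (dg c) = c"
  unfolding cellof_def by (rule the_equality) (auto intro: D_unique)

lemma D_next_cell: assumes "c \<in> D" "dg c < M"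
  shows "cellof (Suc (dg c)) = (fst c, Suc (snd c)) \<or> cellof (Suc (dg c)) = (Suc (fst c), snd c)"
proof -
  have "1 \<le> fst c" using D_props assms by auto
  then have d1: "dg (fst c, Suc (snd c)) = Suc (dg c)" "dg (Suc (fst c), snd c) = Suc (dg c)"
    by (auto simp: dg_def)
  show ?thesis using D_next[OF assms] cellof_eq d1 by metis
qed

lemma cell_mono_aux: assumes "c \<in> D" shows "dg c + d \<le> M \<Longrightarrow> fst c \<le> fst (cellof (dg c + d)) \<and> snd c \<le> snd (cellof (dg c + d))"
proof (induction d)
  case 0 then show ?case using cellof_eq assms by simp
next
  case (Suc d)
  have p: "1 \<le> dg c" using D_props assms by auto
  define c1 where "c1 = cellof (dg c + d)"
  have c1: "c1 \<in> D" "dg c1 = dg c + d" using cellof[of "dg c + d"] Suc p unfolding c1_def by auto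
  have "dg c1 < M" using c1 Suc by simp
  from D_next_cell[OF c1(1) this] have "cellof (dg c + Suc d) = (fst c1, Suc (snd c1)) \<or> cellof (dg c + Suc d) = (Suc (fst c1), snd c1)"
    using c1 by simp
  then show ?case using Suc c1_def by auto
qed

lemma cell_mono: assumes "c \<in> D" "c' \<in> D" "dg c \<le> dg c'" shows "fst c \<le> fst c'" "snd c \<le> snd c'"
proof -
  have "dg c + (dg c' - dg c) \<le> M" using D_props assms by auto
  from cell_mono_aux[OF assms(1) this] show "fst c \<le> fst c'" "snd c \<le> snd c'"
    using assms cellof_eq by auto
qed

lemma D_tri: assumes "c \<in> D" shows "1 \<le> fst c \<and> fst c \<le> M \<and> 1 \<le> snd c \<and> snd c \<le> M - fst c + 1"
  using D_props[OF assms] by (auto simp: dg_def)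

lemma qa_val: assumes "is_quasi_array M Q" "c \<in> D" shows "Q c = Q (1, dg c) + (fst c - 1)" "1 \<le> Q c"
proof -
  obtain i j where c: "c = (i,j)" by (cases c)
  have "1 \<le> i \<and> i \<le> M \<and> 1 \<le> j \<and> j \<le> M - i + 1" using D_tri[OF assms(2)] c by simp
  moreover have "\<forall>i j. 1 \<le> i \<and> i \<le> M \<and> 1 \<le> j \<and> j \<le> M - i + 1 \<longrightarrow>
            1 \<le> Q (i, j) \<and> Q (i, j) = Q (1, i + j - 1) + (i - 1)" using assms(1) unfolding is_quasi_array_def by blast
  ultimately have "1 \<le> Q (i, j) \<and> Q (i, j) = Q (1, i + j - 1) + (i - 1)" by blast
  then show "Q c = Q (1, dg c) + (fst c - 1)" "1 \<le> Q c" using c unfolding dg_def by auto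
qed

lemma qa_mono: assumes "is_quasi_array M Q" "1 \<le> j" "j \<le> j'" "j' \<le> M" shows "Q (1,j) \<le> Q (1,j')"
  using assms(3,4)
proof (induction j' rule: dec_induct)
  case base then show ?case by simp
next
  case (step k)
  moreover have "\<forall>j. 1 \<le> j \<and> j < M \<longrightarrow> Q (1, j) \<le> Q (1, Suc j)" using assms(1) unfolding is_quasi_array_def by blast
  ultimately have "Q (1,k) \<le> Q (1, Suc k)" using assms(2) by simp
  then show ?case using step by simp
qed

lemma qa_val_mono: assumes "is_quasi_array M Q" "c \<in> D" "c' \<in> D" "dg c \<le> dg c'" shows "Q c \<le> Q c'"
proof -
  have "Q (1, dg c) \<le> Q (1, dg c')" using qa_mono[OF assms(1)] D_props assms by auto
  then show ?thesis using qa_val[OF assms(1)] assms cell_mono[OF assms(2-4)] by simp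
qed

lemma proj_tab: assumes "is_quasi_array M Q" shows "is_qr_tableau \<sigma> (qa_proj \<sigma> Q)"
proof -
  have A: "\<forall>c\<in>D. 1 \<le> qa_proj \<sigma> Q c" using qa_val[OF assms] by (simp add: qa_proj_def)
  have B: "qa_proj \<sigma> Q (i, j) \<le> qa_proj \<sigma> Q (i, Suc j)" if "(i, j) \<in> D" "(i, Suc j) \<in> D" for i j
    using qa_val_mono[OF assms that] that by (simp add: qa_proj_def dg_def)
  have C: "qa_proj \<sigma> Q (i, j) < qa_proj \<sigma> Q (Suc i, j)" if "(i, j) \<in> D" "(Suc i, j) \<in> D" for i j
  proof -
    have d: "dg (i,j) \<le> dg (Suc i, j)" by (simp add: dg_def)
    have "Q (1, dg (i,j)) \<le> Q (1, dg (Suc i, j))" using qa_mono[OF assms] D_props[OF that(1)] D_props[OF that(2)] d by auto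
    then show ?thesis using qa_val[OF assms that(1)] qa_val[OF assms that(2)] that D_props[OF that(1)] by (simp add: qa_proj_def)
  qed
  show ?thesis unfolding is_qr_tableau_def using A B C by (auto simp: qa_proj_def)
qed

lemma qa_tri: assumes "is_quasi_array M Q" "1 \<le> i \<and> i \<le> M \<and> 1 \<le> j \<and> j \<le> M - i + 1"
  shows "1 \<le> Q (i, j) \<and> Q (i, j) = Q (1, i + j - 1) + (i - 1)"
proof -
  have "\<forall>i j. 1 \<le> i \<and> i \<le> M \<and> 1 \<le> j \<and> j \<le> M - i + 1 \<longrightarrow>
            1 \<le> Q (i, j) \<and> Q (i, j) = Q (1, i + j - 1) + (i - 1)" using assms(1) unfolding is_quasi_array_def by blast
  then show ?thesis using assms(2) by blast
qed

lemma qa_out: assumes "is_quasi_array M Q" "\<not> (1 \<le> i \<and> i \<le> M \<and> 1 \<le> j \<and> j \<le> M - i + 1)"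
  shows "Q (i, j) = 0"
proof -
  have "\<forall>i j. \<not> (1 \<le> i \<and> i \<le> M \<and> 1 \<le> j \<and> j \<le> M - i + 1) \<longrightarrow> Q (i, j) = 0" using assms(1) unfolding is_quasi_array_def by blast
  then show ?thesis using assms(2) by blast
qed

lemma qa_pos1: assumes "is_quasi_array M Q" "1 \<le> j" "j \<le> M" shows "1 \<le> Q (1,j)"
  using qa_tri[OF assms(1), of 1 j] assms by auto

lemma qa_ext: assumes "is_quasi_array M Q" "is_quasi_array M Q'" "\<And>j. 1 \<le> j \<Longrightarrow> j \<le> M \<Longrightarrow> Q (1,j) = Q' (1,j)"
  shows "Q = Q'"
proof
  fix c :: "nat \<times> nat"
  obtain i j where c: "c = (i,j)" by (cases c)
  show "Q c = Q' c"
  proof (cases "1 \<le> i \<and> i \<le> M \<and> 1 \<le> j \<and> j \<le> M - i + 1")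
    case True
    then have "Q (i,j) = Q (1, i+j-1) + (i-1)" "Q' (i,j) = Q' (1, i+j-1) + (i-1)"
      using qa_tri assms(1,2) by auto
    moreover have "Q (1, i+j-1) = Q' (1, i+j-1)" using assms(3) True by auto
    ultimately show ?thesis using c by simp
  next
    case False
    then show ?thesis using qa_out[OF assms(1) False] qa_out[OF assms(2) False] c by simp
  qed
qed

lemma proj_inj: assumes "is_quasi_array M Q" "is_quasi_array M Q'" "qa_proj \<sigma> Q = qa_proj \<sigma> Q'"
  shows "Q = Q'"
proof (rule qa_ext[OF assms(1,2)])
  fix j assume j: "1 \<le> j" "j \<le> M"
  have c: "cellof j \<in> D" "dg (cellof j) = j" using cellof j by auto
  have "Q (cellof j) = Q' (cellof j)" using assms(3) c unfolding qa_proj_def by meson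
  then show "Q (1,j) = Q' (1,j)" using qa_val(1)[OF assms(1) c(1)] qa_val(1)[OF assms(2) c(1)] c by simp
qed


end


context comp begin

lemma proj_surj: assumes T: "is_qr_tableau \<sigma> T" shows "\<exists>Q. is_quasi_array M Q \<and> qa_proj \<sigma> Q = T"
proof -
  define a where "a k = T (cellof k) + 1 - fst (cellof k)" for k
  have stp: "a k \<le> a (Suc k)" if k: "1 \<le> k" "k < M" for k
  proof -
    have c: "cellof k \<in> D" "dg (cellof k) = k" using cellof k by auto
    obtain i j where ij: "cellof k = (i,j)" by (cases "cellof k")
    have c1: "cellof (Suc k) \<in> D" using cellof k by auto
    have "dg (cellof k) < M" using c k by simp
    from D_next_cell[OF c(1) this] have "cellof (Suc k) = (i, Suc j) \<or> cellof (Suc k) = (Suc i, j)"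
      using c(2) ij by simp
    then show ?thesis
    proof
      assume 1: "cellof (Suc k) = (i, Suc j)"
      have "T (i,j) \<le> T (i, Suc j)" using T c(1) c1 unfolding is_qr_tableau_def 1 ij by blast
      then show ?thesis unfolding a_def using 1 ij by simp
    next
      assume 2: "cellof (Suc k) = (Suc i, j)"
      have "T (i,j) < T (Suc i, j)" using T c(1) c1 unfolding is_qr_tableau_def 2 ij by blast
      then show ?thesis unfolding a_def using 2 ij by simp
    qed
  qed
  have amono: "a j \<le> a j'" if "1 \<le> j" "j \<le> j'" "j' \<le> M" for j j'
    using that(2,3)
  proof (induction j' rule: dec_induct)
    case base then show ?case by simp
  next
    case (step k) then show ?case using stp[of k] that(1) by simp
  qed
  have a1: "1 \<le> a 1" if "1 \<le> M"
  proof -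
    have c: "cellof 1 \<in> D" "dg (cellof 1) = 1" using cellof[of 1] that by auto
    obtain i j where ij: "cellof 1 = (i,j)" by (cases "cellof 1")
    have "1 \<le> i" "1 \<le> j" using D_props[OF c(1)] ij by auto
    then have "i = 1" using c(2) ij by (simp add: dg_def)
    moreover have "1 \<le> T (cellof 1)" using T c unfolding is_qr_tableau_def by auto
    ultimately show ?thesis using ij by (simp add: a_def)
  qed
  have apos: "1 \<le> a k" if "1 \<le> k" "k \<le> M" for k using a1 amono[of 1 k] that by simp
  define Q where "Q c = (if 1 \<le> fst c \<and> fst c \<le> M \<and> 1 \<le> snd c \<and> snd c \<le> M - fst c + 1
      then a (fst c + snd c - 1) + (fst c - 1) else 0)" for c
  have qa: "is_quasi_array M Q"
    unfolding is_quasi_array_def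
  proof (intro conjI allI impI)
    fix i j assume "\<not> (1 \<le> i \<and> i \<le> M \<and> 1 \<le> j \<and> j \<le> M - i + 1)"
    then show "Q (i,j) = 0" unfolding Q_def by auto
  next
    fix i j assume h: "1 \<le> i \<and> i \<le> M \<and> 1 \<le> j \<and> j \<le> M - i + 1"
    have "1 \<le> a (i+j-1)" using h by (intro apos) auto
    then show "1 \<le> Q (i,j)" using h by (simp add: Q_def) arith
    show "Q (i,j) = Q (1, i + j - 1) + (i - 1)" using h by (simp add: Q_def) arith
  next
    fix j assume h: "1 \<le> j \<and> j < M"
    have "a j \<le> a (Suc j)" using h by (intro stp) auto
    then show "Q (1,j) \<le> Q (1, Suc j)" using h by (simp add: Q_def)
  qed
  have "qa_proj \<sigma> Q = T"
  proof
    fix c show "qa_proj \<sigma> Q c = T c"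
    proof (cases "c \<in> D")
      case True
      obtain i j where ij: "c = (i,j)" by (cases c)
      have e: "cellof (dg c) = c" using cellof_eq True .
      have "1 \<le> a (dg c)" using apos D_props[OF True] by auto
      then have t: "T c + 1 - i \<ge> 1" using e ij unfolding a_def by simp
      have tr: "1 \<le> i \<and> i \<le> M \<and> 1 \<le> j \<and> j \<le> M - i + 1" using D_tri[OF True] ij by simp
      have "Q c = a (i + j - 1) + (i - 1)" using tr ij by (simp add: Q_def)
      also have "a (i+j-1) = T c + 1 - i" using e ij unfolding a_def dg_def by simp
      finally have "Q c = T c" using t tr by simp
      then show ?thesis using True unfolding qa_proj_def by simp
    next
      case False
      have "\<forall>c. c \<notin> D \<longrightarrow> T c = 0" using T unfolding is_qr_tableau_def by blast
      then show ?thesis using False unfolding qa_proj_def by (cases c) auto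
    qed
  qed
  then show ?thesis using qa by blast
qed

end



lemma sorted_wrt_concat_map:
  "sorted_wrt Q xs \<Longrightarrow> (\<And>x. x \<in> set xs \<Longrightarrow> sorted_wrt R (f x)) \<Longrightarrow>
   (\<And>x y a b. x \<in> set xs \<Longrightarrow> y \<in> set xs \<Longrightarrow> Q x y \<Longrightarrow> a \<in> set (f x) \<Longrightarrow> b \<in> set (f y) \<Longrightarrow> R a b)
   \<Longrightarrow> sorted_wrt R (concat (map f xs))"
proof (induction xs)
  case Nil then show ?case by simp
next
  case (Cons a xs)
  have "sorted_wrt R (concat (map f xs))"
  proof (rule Cons.IH)
    show "sorted_wrt Q xs" using Cons.prems(1) by simp
    show "\<And>x. x \<in> set xs \<Longrightarrow> sorted_wrt R (f x)" using Cons.prems(2) by simp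
    show "\<And>x y a b. x \<in> set xs \<Longrightarrow> y \<in> set xs \<Longrightarrow> Q x y \<Longrightarrow> a \<in> set (f x) \<Longrightarrow> b \<in> set (f y) \<Longrightarrow> R a b"
      using Cons.prems(3) by (metis list.set_intros(2))
  qed
  moreover have "sorted_wrt R (f a)" using Cons by simp
  moreover have "\<forall>u\<in>set (f a). \<forall>v\<in>set (concat (map f xs)). R u v" using Cons.prems(1) by (auto intro: Cons.prems(3))
  ultimately show ?case by (simp add: sorted_wrt_append)
qed

lemma sorted_wrt_irrefl_distinct': "sorted_wrt R xs \<Longrightarrow> (\<And>x. \<not> R x x) \<Longrightarrow> distinct xs"
  by (induction xs) auto

definition Rel :: "nat \<Rightarrow> (nat \<times> nat \<Rightarrow> nat) \<Rightarrow> (nat \<times> nat \<Rightarrow> nat) \<Rightarrow> bool" where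
  "Rel m Q Q' \<longleftrightarrow> (\<exists>k. 1 \<le> k \<and> k \<le> m \<and> (k < m \<longrightarrow> Q (1,k) < Q (1, Suc k)) \<and>
     (\<forall>j. 1 \<le> j \<and> j \<le> m \<longrightarrow> Q' (1,j) = (if j = k then Suc (Q (1,k)) else Q (1,j))))"

context comp begin

definition Lcol :: "nat \<Rightarrow> (nat \<times> nat) list" where
  "Lcol j = map (\<lambda>i. (i,j)) (rev (filter (\<lambda>i. (i,j) \<in> D) [1..<Suc len]))"
definition L :: "(nat \<times> nat) list" where
  "L = concat (map Lcol [1..<Suc M])"

lemma read_L: "col_reading \<sigma> T = map T L"
proof -
  have e: "\<And>j. map T (Lcol j) = map (\<lambda>i. T (i, j)) (rev (filter (\<lambda>i. (i,j) \<in> D) [1..<Suc len]))"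
    unfolding Lcol_def map_map o_def by (rule refl)
  show ?thesis unfolding col_reading_def L_def map_concat map_map
    by (intro arg_cong[where f=concat] map_cong refl) (simp only: comp_apply e)
qed

lemma set_Lcol: "set (Lcol j) = {c. snd c = j \<and> 1 \<le> fst c \<and> fst c \<le> len \<and> c \<in> D}"
  unfolding Lcol_def by (auto simp del: upt_Suc)

lemma set_L: "set L = D"
proof
  show "set L \<subseteq> D" unfolding L_def using set_Lcol by auto
  show "D \<subseteq> set L"
  proof
    fix c assume c: "c \<in> D"
    have "1 \<le> fst c" "fst c \<le> len" "1 \<le> snd c" "snd c \<le> M" using D_props[OF c] by auto
    then have "c \<in> set (Lcol (snd c))" "snd c \<in> set [1..<Suc M]" using c set_Lcol by (auto simp del: upt_Suc)
    then show "c \<in> set L" unfolding L_def by auto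
  qed
qed

lemma sorted_L: "sorted_wrt Rc L"
  unfolding L_def
proof (rule sorted_wrt_concat_map[where Q="(<)"])
  show "sorted_wrt (<) [1..<Suc M]" by (rule sorted_wrt_upt)
next
  fix j
  have "sorted_wrt (<) (filter (\<lambda>i. (i,j) \<in> D) [1..<Suc len])"
    by (rule sorted_wrt_filter) (rule sorted_wrt_upt)
  then show "sorted_wrt Rc (Lcol j)" unfolding Lcol_def
    by (simp add: sorted_wrt_map sorted_wrt_rev Rc_def)
next
  fix x y a b assume "x < y" "a \<in> set (Lcol x)" "b \<in> set (Lcol y)"
  then show "Rc a b" unfolding Lcol_def Rc_def by auto
qed

lemma Rc_irrefl: "\<not> Rc x x" by (simp add: Rc_def)
lemma Rc_asym: "Rc x y \<Longrightarrow> \<not> Rc y x" by (auto simp: Rc_def)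

lemma distinct_L: "distinct L"
  using sorted_wrt_irrefl_distinct'[OF sorted_L] Rc_irrefl by blast

lemma less_pos: "p < q \<Longrightarrow> q < length L \<Longrightarrow> Rc (L!p) (L!q)"
  using sorted_L by (simp add: sorted_wrt_iff_nth_less)

lemma pos_less: assumes "p < length L" "q < length L" "Rc (L!p) (L!q)" shows "p < q"
proof (rule ccontr)
  assume "\<not> p < q"
  then consider "p = q" | "q < p" by linarith
  then show False
  proof cases
    case 1 then show ?thesis using assms Rc_irrefl by simp
  next
    case 2 then show ?thesis using less_pos[OF 2 assms(1)] assms(3) Rc_asym by blast
  qed
qed

lemma L_D: "p < length L \<Longrightarrow> L!p \<in> D" using set_L nth_mem by blast

lemma D_L: assumes "c \<in> D" obtains p where "p < length L" "L!p = c"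
  using assms set_L by (metis in_set_conv_nth)

lemma L_inj: "p < length L \<Longrightarrow> q < length L \<Longrightarrow> L!p = L!q \<Longrightarrow> p = q"
  using distinct_L nth_eq_iff_index_eq by blast

lemma col_step: assumes qa: "is_quasi_array M Q" and c: "c \<in> D" "c' \<in> D" and s: "snd c = snd c'" and d: "dg c < dg c'"
  shows "Q c + (dg c' - dg c) \<le> Q c'" "Q c' = Suc (Q c) \<Longrightarrow> dg c' = Suc (dg c) \<and> Q (1, dg c') = Q (1, dg c)"
proof -
  have v: "Q c = Q (1, dg c) + (fst c - 1)" "Q c' = Q (1, dg c') + (fst c' - 1)" using qa_val[OF qa] c by auto
  have m: "Q (1, dg c) \<le> Q (1, dg c')" using qa_mono[OF qa] D_props c d by auto
  have f: "fst c' - fst c = dg c' - dg c" "fst c \<le> fst c'" "1 \<le> fst c"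
    using s d D_props[OF c(1)] D_props[OF c(2)] by (auto simp: dg_def)
  show "Q c + (dg c' - dg c) \<le> Q c'" using v m f by linarith
  show "Q c' = Suc (Q c) \<Longrightarrow> dg c' = Suc (dg c) \<and> Q (1, dg c') = Q (1, dg c)"
    using v m f d by linarith
qed

lemma above: assumes qa: "is_quasi_array M Q" and c: "c \<in> D" "c' \<in> D" and k: "dg c < M"
  and lt: "Q (1, dg c) < Q (1, Suc (dg c))" and d: "dg c < dg c'"
  shows "Q c < Q c'"
proof -
  have v: "Q c = Q (1, dg c) + (fst c - 1)" "Q c' = Q (1, dg c') + (fst c' - 1)" using qa_val[OF qa] c by auto
  have m: "Q (1, Suc (dg c)) \<le> Q (1, dg c')" using qa_mono[OF qa] D_props c d by auto
  have f: "fst c \<le> fst c'" using cell_mono c d by auto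
  show ?thesis using v m f lt by linarith
qed

end



context comp begin

lemma edge_back: assumes qa: "is_quasi_array M Q" "is_quasi_array M Q'" and R: "Rel M Q Q'"
  shows "\<exists>i\<ge>1. qk_f i (map Q L) = Some (map Q' L)"
proof -
  obtain k where k: "1 \<le> k" "k \<le> M" "k < M \<longrightarrow> Q (1,k) < Q (1, Suc k)"
    and Q': "\<And>j. 1 \<le> j \<Longrightarrow> j \<le> M \<Longrightarrow> Q' (1,j) = (if j = k then Suc (Q (1,k)) else Q (1,j))"
    using R unfolding Rel_def by blast
  define c where "c = cellof k"
  have c: "c \<in> D" "dg c = k" using cellof k unfolding c_def by auto
  obtain p0 where p0: "p0 < length L" "L!p0 = c" using D_L[OF c(1)] by blast
  define i0 where "i0 = Q c"
  define w where "w = map Q L"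
  have i0: "1 \<le> i0" using qa_val[OF qa(1) c(1)] unfolding i0_def by simp
  have lw: "length w = length L" unfolding w_def by simp
  have wn: "\<And>p. p < length L \<Longrightarrow> w!p = Q (L!p)" unfolding w_def by simp
  have after: "Q c < Q c'" if "c' \<in> D" "k < dg c'" for c'
  proof -
    have "dg c' \<le> M" using D_props[OF that(1)] by simp
    then have "k < M" using that by simp
    then show ?thesis using above[OF qa(1) c(1) that(1)] k c that by simp
  qed
  have a: "i0 \<in> set w" using p0 wn lw unfolding i0_def by (metis nth_mem)
  have b: "\<not> (\<exists>p q. p < q \<and> q < length w \<and> w ! p = i0 + 1 \<and> w ! q = i0)"
  proof
    assume "\<exists>p q. p < q \<and> q < length w \<and> w ! p = i0 + 1 \<and> w ! q = i0"
    then obtain p q where pq: "p < q" "q < length L" "w!p = i0 + 1" "w!q = i0" using lw by auto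
    define c1 where "c1 = L!p"
    define c2 where "c2 = L!q"
    have cc: "c1 \<in> D" "c2 \<in> D" using L_D pq unfolding c1_def c2_def by auto
    have v: "Q c1 = Suc i0" "Q c2 = i0" using pq wn unfolding c1_def c2_def by auto
    have Rc: "Rc c1 c2" using less_pos pq unfolding c1_def c2_def by auto
    have d12: "dg c2 < dg c1"
    proof (rule ccontr)
      assume "\<not> dg c2 < dg c1"
      then have "Q c1 \<le> Q c2" using qa_val_mono[OF qa(1) cc(1) cc(2)] by simp
      then show False using v by simp
    qed
    have "snd c2 \<le> snd c1" using cell_mono[OF cc(2) cc(1)] d12 by simp
    then have s: "snd c2 = snd c1" using Rc unfolding Rc_def by auto
    have st: "dg c1 = Suc (dg c2)" "Q (1, dg c1) = Q (1, dg c2)"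
      using col_step(2)[OF qa(1) cc(2) cc(1) s d12] v by auto
    have "dg c2 \<le> k"
    proof (rule ccontr)
      assume "\<not> dg c2 \<le> k"
      then have "Q c < Q c2" using after cc by simp
      then show False using v unfolding i0_def by simp
    qed
    moreover have "k < dg c1"
    proof (rule ccontr)
      assume "\<not> k < dg c1"
      then have "Q c1 \<le> Q c" using qa_val_mono[OF qa(1) cc(1) c(1)] c by simp
      then show False using v unfolding i0_def by simp
    qed
    ultimately have "dg c2 = k" "k < M" using st D_props[OF cc(1)] by auto
    then show False using k st by simp
  qed
  have Smax: "Max {p. p < length w \<and> w ! p = i0} = p0"
  proof (rule Max_eqI)
    show "finite {p. p < length w \<and> w ! p = i0}" by simp
    show "p0 \<in> {p. p < length w \<and> w ! p = i0}" using p0 lw wn unfolding i0_def by simp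
    fix p assume "p \<in> {p. p < length w \<and> w ! p = i0}"
    then have p: "p < length L" "Q (L!p) = Q c" using lw wn unfolding i0_def by auto
    define c' where "c' = L!p"
    have c': "c' \<in> D" using L_D p unfolding c'_def by simp
    show "p \<le> p0"
    proof (cases "c' = c")
      case True then show ?thesis using L_inj p p0 unfolding c'_def by auto
    next
      case False
      then have "dg c' \<noteq> k" using cellof_eq[OF c'] unfolding c_def by auto
      moreover have "\<not> k < dg c'" using after[OF c'] p unfolding c'_def by auto
      ultimately have lt: "dg c' < k" by simp
      have "snd c' \<le> snd c" using cell_mono[OF c' c(1)] lt c by simp
      moreover have "snd c' \<noteq> snd c"
      proof
        assume "snd c' = snd c"
        then have "Q c' + (dg c - dg c') \<le> Q c" using col_step(1)[OF qa(1) c' c(1)] lt c by simp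
        then show False using p lt c unfolding c'_def by simp
      qed
      ultimately have "Rc (L!p) (L!p0)" using p0 unfolding Rc_def c'_def by simp
      then show ?thesis using pos_less p p0 by fastforce
    qed
  qed
  have d: "w[p0 := i0 + 1] = map Q' L"
  proof (rule nth_equalityI)
    show "length (w[p0 := i0 + 1]) = length (map Q' L)" using lw by simp
    fix p assume "p < length (w[p0 := i0 + 1])"
    then have p: "p < length L" using lw by simp
    have c': "L!p \<in> D" using L_D p by simp
    show "w[p0 := i0 + 1] ! p = map Q' L ! p"
    proof (cases "p = p0")
      case True
      have "Q' c = Q' (1, k) + (fst c - 1)" using qa_val[OF qa(2) c(1)] c by simp
      moreover have "Q c = Q (1, k) + (fst c - 1)" using qa_val[OF qa(1) c(1)] c by simp
      moreover have "Q' (1,k) = Suc (Q (1,k))" using Q' k by simp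
      ultimately have "Q' c = Suc (Q c)" using D_props[OF c(1)] by simp
      then show ?thesis using True p0 lw unfolding i0_def by simp
    next
      case False
      then have "L!p \<noteq> c" using L_inj p p0 by auto
      then have ne: "dg (L!p) \<noteq> k" using cellof_eq[OF c'] unfolding c_def by auto
      have "1 \<le> dg (L!p)" "dg (L!p) \<le> M" using D_props[OF c'] by auto
      then have "Q' (1, dg (L!p)) = Q (1, dg (L!p))" using Q' ne by simp
      then have "Q' (L!p) = Q (L!p)" using qa_val[OF qa(1) c'] qa_val[OF qa(2) c'] by simp
      then show ?thesis using False p wn by simp
    qed
  qed
  have "qk_f i0 w = Some (map Q' L)"
    unfolding qk_f_def using a b Smax d by simp
  then show ?thesis using i0 unfolding w_def by blast
qed

lemma edge_fwd: assumes qa: "is_quasi_array M Q" "is_quasi_array M Q'"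
  and i: "qk_f i (map Q L) = Some (map Q' L)"
  shows "Rel M Q Q'"
proof -
  define w where "w = map Q L"
  have lw: "length w = length L" unfolding w_def by simp
  have wn: "\<And>p. p < length L \<Longrightarrow> w!p = Q (L!p)" unfolding w_def by simp
  define S where "S = {p. p < length w \<and> w ! p = i}"
  define Mx where "Mx = Max S"
  have cond: "i \<in> set w" "\<not> (\<exists>p q. p < q \<and> q < length w \<and> w ! p = i + 1 \<and> w ! q = i)"
    and eq: "w[Mx := i + 1] = map Q' L"
    using i unfolding qk_f_def w_def[symmetric] S_def[symmetric] Mx_def[symmetric]
    by (auto split: if_splits)
  have fS: "finite S" unfolding S_def by simp
  have neS: "S \<noteq> {}" using cond(1) unfolding S_def by (auto simp: in_set_conv_nth)
  have MxS: "Mx \<in> S" using Max_in[OF fS neS] unfolding Mx_def .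
  have Mxmax: "\<And>p. p \<in> S \<Longrightarrow> p \<le> Mx" using Max_ge[OF fS] unfolding Mx_def by blast
  have Mx: "Mx < length L" "Q (L!Mx) = i" using MxS wn lw unfolding S_def by auto
  define c where "c = L!Mx"
  define k where "k = dg c"
  have c: "c \<in> D" using L_D Mx unfolding c_def by simp
  have kb: "1 \<le> k" "k \<le> M" using D_props[OF c] unfolding k_def by auto
  have cc: "cellof k = c" using cellof_eq[OF c] unfolding k_def .
  have Q'L: "\<And>p. p < length L \<Longrightarrow> Q' (L!p) = (if p = Mx then i + 1 else Q (L!p))"
  proof -
    fix p assume p: "p < length L"
    have "Q' (L!p) = w[Mx := i + 1] ! p" using eq p by simp
    then show "Q' (L!p) = (if p = Mx then i + 1 else Q (L!p))" using p lw wn by simp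
  qed
  have vals: "Q' (1,j) = (if j = k then Suc (Q (1,k)) else Q (1,j))" if j: "1 \<le> j" "j \<le> M" for j
  proof -
    have cj: "cellof j \<in> D" "dg (cellof j) = j" using cellof j by auto
    obtain pj where pj: "pj < length L" "L!pj = cellof j" using D_L[OF cj(1)] by blast
    have v: "Q (cellof j) = Q (1, j) + (fst (cellof j) - 1)" "Q' (cellof j) = Q' (1, j) + (fst (cellof j) - 1)"
      using qa_val[OF qa(1) cj(1)] qa_val[OF qa(2) cj(1)] cj by auto
    show ?thesis
    proof (cases "j = k")
      case True
      then have "pj = Mx" using L_inj pj Mx cc unfolding c_def by auto
      then have "Q' (cellof j) = Q (cellof j) + 1" using Q'L pj Mx True cc unfolding c_def by simp
      then show ?thesis using v True by simp
    next
      case False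
      then have "pj \<noteq> Mx" using pj cj unfolding k_def c_def by auto
      then have "Q' (cellof j) = Q (cellof j)" using Q'L[OF pj(1)] pj(2) by simp
      then show ?thesis using v False by simp
    qed
  qed
  have lt: "Q (1,k) < Q (1, Suc k)" if km: "k < M"
  proof (rule ccontr)
    assume "\<not> Q (1,k) < Q (1, Suc k)"
    moreover have "Q (1,k) \<le> Q (1, Suc k)" using qa_mono[OF qa(1)] kb km by simp
    ultimately have eqa: "Q (1, Suc k) = Q (1, k)" by simp
    define c2 where "c2 = cellof (Suc k)"
    have c2: "c2 \<in> D" "dg c2 = Suc k" using cellof[of "Suc k"] km unfolding c2_def by auto
    obtain p2 where p2: "p2 < length L" "L!p2 = c2" using D_L[OF c2(1)] by blast
    have v: "Q c = Q (1, k) + (fst c - 1)" "Q c2 = Q (1, Suc k) + (fst c2 - 1)"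
      using qa_val[OF qa(1) c] qa_val[OF qa(1) c2(1)] c2 unfolding k_def by auto
    have f1: "1 \<le> fst c" using D_props[OF c] by simp
    have "dg c < M" using km unfolding k_def .
    from D_next_cell[OF c this] have "c2 = (fst c, Suc (snd c)) \<or> c2 = (Suc (fst c), snd c)"
      unfolding c2_def k_def by simp
    then show False
    proof
      assume r: "c2 = (fst c, Suc (snd c))"
      then have "Q c2 = i" using v eqa Mx unfolding c_def by simp
      then have "p2 \<in> S" using p2 lw wn unfolding S_def by simp
      then have "p2 \<le> Mx" using Mxmax by simp
      moreover have "Rc (L!Mx) (L!p2)" using r p2 unfolding Rc_def c_def by simp
      then have "Mx < p2" using pos_less Mx p2 by blast
      ultimately show False by simp
    next
      assume dn: "c2 = (Suc (fst c), snd c)"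
      then have "Q c2 = i + 1" using v eqa Mx f1 unfolding c_def by simp
      moreover have "Rc (L!p2) (L!Mx)" using dn p2 unfolding Rc_def c_def by simp
      then have "p2 < Mx" using pos_less Mx p2 by blast
      moreover have "w!p2 = i + 1" "w!Mx = i" using wn p2 Mx \<open>Q c2 = i + 1\<close> by auto
      ultimately show False using cond(2) lw Mx by auto
    qed
  qed
  show ?thesis unfolding Rel_def using kb vals lt by blast
qed

lemma read_proj: "col_reading \<sigma> (qa_proj \<sigma> Q) = map Q L"
  unfolding read_L using set_L by (intro map_cong refl) (simp add: qa_proj_def)

lemma edge_proj: assumes "is_quasi_array M Q" "is_quasi_array M Q'"
  shows "(qa_proj \<sigma> Q, qa_proj \<sigma> Q') \<in> hypo_edges \<sigma> \<longleftrightarrow> Rel M Q Q'"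
  unfolding hypo_edges_def hypo_vertices_def read_proj
  using proj_tab[OF assms(1)] proj_tab[OF assms(2)] edge_back[OF assms] edge_fwd[OF assms] by (auto simp: read_proj)

lemma vert_char: "hypo_vertices \<sigma> = qa_proj \<sigma> ` {Q. is_quasi_array M Q}"
  unfolding hypo_vertices_def using proj_tab proj_surj by blast

lemma bar_proj: assumes "is_quasi_array M Q" shows "qa_bar \<sigma> (qa_proj \<sigma> Q) = Q"
  unfolding qa_bar_def
  by (rule the_equality) (use assms proj_inj in auto)

end

theorem corollary4p2:
  fixes m :: nat and \<sigma> \<tau> :: "nat list"
  assumes "0 < m" and "is_composition m \<sigma>" and "is_composition m \<tau>"
  shows "digraph_iso (Psi \<sigma> \<tau>) (hypo_vertices \<sigma>) (hypo_edges \<sigma>)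
                                 (hypo_vertices \<tau>) (hypo_edges \<tau>)"
proof -
  interpret s: comp \<sigma> using assms(2) unfolding is_composition_def by unfold_locales blast
  interpret t: comp \<tau> using assms(3) unfolding is_composition_def by unfold_locales blast
  have ms: "sum_list \<sigma> = m" and mt: "sum_list \<tau> = m" using assms unfolding is_composition_def by auto
  define QA where "QA = {Q. is_quasi_array m Q}"
  have Vs: "hypo_vertices \<sigma> = qa_proj \<sigma> ` QA" using s.vert_char ms unfolding QA_def by simp
  have Vt: "hypo_vertices \<tau> = qa_proj \<tau> ` QA" using t.vert_char mt unfolding QA_def by simp
  have PsiQ: "Psi \<sigma> \<tau> (qa_proj \<sigma> Q) = qa_proj \<tau> Q" if "Q \<in> QA" for Q
    using s.bar_proj[of Q] that ms unfolding Psi_def QA_def by simp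
  have inj: "inj_on (Psi \<sigma> \<tau>) (hypo_vertices \<sigma>)"
  proof (rule inj_onI)
    fix u v assume u: "u \<in> hypo_vertices \<sigma>" and v: "v \<in> hypo_vertices \<sigma>" and e: "Psi \<sigma> \<tau> u = Psi \<sigma> \<tau> v"
    obtain Q1 where Q1: "Q1 \<in> QA" "u = qa_proj \<sigma> Q1" using u Vs by auto
    obtain Q2 where Q2: "Q2 \<in> QA" "v = qa_proj \<sigma> Q2" using v Vs by auto
    have "qa_proj \<tau> Q1 = qa_proj \<tau> Q2" using e PsiQ Q1 Q2 by simp
    then have "Q1 = Q2" using t.proj_inj Q1 Q2 mt unfolding QA_def by simp
    then show "u = v" using Q1 Q2 by simp
  qed
  have img: "Psi \<sigma> \<tau> ` hypo_vertices \<sigma> = hypo_vertices \<tau>"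
    unfolding Vs Vt image_image using PsiQ by (intro image_cong refl) simp
  have edges: "(u, v) \<in> hypo_edges \<sigma> \<longleftrightarrow> (Psi \<sigma> \<tau> u, Psi \<sigma> \<tau> v) \<in> hypo_edges \<tau>"
    if u: "u \<in> hypo_vertices \<sigma>" and v: "v \<in> hypo_vertices \<sigma>" for u v
  proof -
    obtain Q1 where Q1: "Q1 \<in> QA" "u = qa_proj \<sigma> Q1" using u Vs by auto
    obtain Q2 where Q2: "Q2 \<in> QA" "v = qa_proj \<sigma> Q2" using v Vs by auto
    have "(u, v) \<in> hypo_edges \<sigma> \<longleftrightarrow> Rel m Q1 Q2"
      using s.edge_proj[of Q1 Q2] Q1 Q2 ms unfolding QA_def by simp
    also have "\<dots> \<longleftrightarrow> (qa_proj \<tau> Q1, qa_proj \<tau> Q2) \<in> hypo_edges \<tau>"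
      using t.edge_proj[of Q1 Q2] Q1 Q2 mt unfolding QA_def by simp
    finally show ?thesis using PsiQ Q1 Q2 by simp
  qed
  show ?thesis unfolding digraph_iso_def bij_betw_def using inj img edges by blast
qed


end
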